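(* Non-determinism of a KAT expression is witnessed by a finite interpretation: if $e\in\mathsf{KAT}(\Sigma,T)$ is not deterministic, then there exist a finite set $S$, $\tau:T\to2^S$ and $\sigma:\Sigma\to2^{S\times S}$ such that $\sigma(p)$ is the graph of a partial function for every $p\in\Sigma$ but $\mathcal{R}[\![e]\!]^\sigma_\tau$ is not the graph of a partial function.
   Context: For finite $T$ (tests), $\Sigma$ (actions): $\mathsf{BA}(T)$: $b::=\mathsf{false}\mid\mathsf{true}\mid t\in T\mid b\vee c\mid b\wedge c\mid\overline b$; $\mathsf{KAT}(\Sigma,T)$: $e::=b\mid p\in\Sigma\mid e+f\mid e\cdot f\mid e^*$. Relational semantics for a set $S$, $\tau:T\to2^S$, $\sigma:\Sigma\to2^{S\times S}$: tests denote subsets $[\![b]\!]_\tau$ (Boolean), $\mathcal{R}[\![b]\!]=\{\langle s,s\rangle:s\in[\![b]\!]_\tau\}$, $\mathcal{R}[\![p]\!]=\sigma(p)$, $\mathcal{R}[\![e+f]\!]=\mathcal{R}[\![e]\!]\cup\mathcal{R}[\![f]\!]$, $\mathcal{R}[\![ef]\!]=\mathcal{R}[\![e]\!]\circ\mathcal{R}[\![f]\!]$ (first $e$, then $f$), $\mathcal{R}[\![e^*]\!]$ is the reflexive-transitive closure of $\mathcal{R}[\![e]\!]$. $e$ is deterministic if for all (possibly infinite) $S$, $\tau$, $\sigma$ with each $\sigma(p)$ the graph of a partial function, $\mathcal{R}[\![e]\!]^\sigma_\tau$ is the graph of a partial function. *)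

theory Defs
  imports Main
begin

datatype 't bexp = BFalse | BTrue | BTest 't | BOr "'t bexp" "'t bexp"
  | BAnd "'t bexp" "'t bexp" | BNot "'t bexp"

datatype ('p, 't) kat = KTest "'t bexp" | KAct 'p | KPlus "('p,'t) kat" "('p,'t) kat"
  | KSeq "('p,'t) kat" "('p,'t) kat" | KStar "('p,'t) kat"

fun bsem :: "'s set \<Rightarrow> ('t \<Rightarrow> 's set) \<Rightarrow> 't bexp \<Rightarrow> 's set" where
  "bsem S \<tau> BFalse = {}"
| "bsem S \<tau> BTrue = S"
| "bsem S \<tau> (BTest t) = \<tau> t"
| "bsem S \<tau> (BOr b c) = bsem S \<tau> b \<union> bsem S \<tau> c"
| "bsem S \<tau> (BAnd b c) = bsem S \<tau> b \<inter> bsem S \<tau> c"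
| "bsem S \<tau> (BNot b) = S - bsem S \<tau> b"

fun rsem :: "'s set \<Rightarrow> ('t \<Rightarrow> 's set) \<Rightarrow> ('p \<Rightarrow> ('s \<times> 's) set) \<Rightarrow> ('p,'t) kat \<Rightarrow> ('s \<times> 's) set" where
  "rsem S \<tau> \<sigma> (KTest b) = {(s, s) | s. s \<in> bsem S \<tau> b}"
| "rsem S \<tau> \<sigma> (KAct p) = \<sigma> p"
| "rsem S \<tau> \<sigma> (KPlus e f) = rsem S \<tau> \<sigma> e \<union> rsem S \<tau> \<sigma> f"
| "rsem S \<tau> \<sigma> (KSeq e f) = rsem S \<tau> \<sigma> e O rsem S \<tau> \<sigma> f"
| "rsem S \<tau> \<sigma> (KStar e) = Id_on S \<union> (rsem S \<tau> \<sigma> e)\<^sup>+"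

definition partial_fun_graph :: "('a \<times> 'b) set \<Rightarrow> bool" where
  "partial_fun_graph R \<longleftrightarrow> (\<forall>x y z. (x, y) \<in> R \<longrightarrow> (x, z) \<in> R \<longrightarrow> y = z)"

definition interp :: "'s set \<Rightarrow> ('t \<Rightarrow> 's set) \<Rightarrow> ('p \<Rightarrow> ('s \<times> 's) set) \<Rightarrow> bool" where
  "interp S \<tau> \<sigma> \<longleftrightarrow> (\<forall>t. \<tau> t \<subseteq> S) \<and> (\<forall>p. \<sigma> p \<subseteq> S \<times> S)"

text \<open>Determinism with respect to all state sets of type 's (any cardinality).
  Since 's is a free type variable of the theorem, non-determinism witnessed in
  any type is covered.\<close>
definition deterministic_in :: "'s itself \<Rightarrow> ('p,'t) kat \<Rightarrow> bool" where
  "deterministic_in _ e \<longleftrightarrow>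
     (\<forall>(S::'s set) \<tau> \<sigma>. interp S \<tau> \<sigma> \<and> (\<forall>p. partial_fun_graph (\<sigma> p))
        \<longrightarrow> partial_fun_graph (rsem S \<tau> \<sigma> e))"

end

theory Submission
  imports Defs
begin

definition rtau :: "'s set \<Rightarrow> ('t \<Rightarrow> 's set) \<Rightarrow> 't \<Rightarrow> 's set" where
  "rtau G \<tau> = (\<lambda>t. \<tau> t \<inter> G)"
definition rsig :: "'s set \<Rightarrow> ('p \<Rightarrow> ('s \<times> 's) set) \<Rightarrow> 'p \<Rightarrow> ('s \<times> 's) set" where
  "rsig G \<sigma> = (\<lambda>p. \<sigma> p \<inter> G \<times> G)"

lemma bsem_sub: "(\<forall>t. \<tau> t \<subseteq> S) \<Longrightarrow> bsem S \<tau> b \<subseteq> S"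
  by (induction b) auto

lemma bsem_res: "(\<forall>t. \<tau> t \<subseteq> S) \<Longrightarrow> G \<subseteq> S \<Longrightarrow> bsem G (rtau G \<tau>) b = bsem S \<tau> b \<inter> G"
  by (induction b) (auto simp: rtau_def)

lemma rsem_sub: "interp S \<tau> \<sigma> \<Longrightarrow> rsem S \<tau> \<sigma> e \<subseteq> S \<times> S"
proof (induction e)
  case (KTest b) then show ?case using bsem_sub[of \<tau> S b] by (auto simp: interp_def)
next
  case (KAct p) then show ?case by (auto simp: interp_def)
next
  case (KStar e)
  then have "(rsem S \<tau> \<sigma> e)\<^sup>+ \<subseteq> S \<times> S"
    by (metis trancl_subset_Sigma)
  then show ?case by auto
qed auto

lemma rsem_mono: "interp S \<tau> \<sigma> \<Longrightarrow> G \<subseteq> H \<Longrightarrow> H \<subseteq> S \<Longrightarrow>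
   rsem G (rtau G \<tau>) (rsig G \<sigma>) e \<subseteq> rsem H (rtau H \<tau>) (rsig H \<sigma>) e"
proof (induction e)
  case (KTest b)
  have "\<forall>t. \<tau> t \<subseteq> S" using KTest by (auto simp: interp_def)
  then have "bsem G (rtau G \<tau>) b \<subseteq> bsem H (rtau H \<tau>) b"
    using bsem_res[of \<tau> S G b] bsem_res[of \<tau> S H b] KTest by auto
  then show ?case by auto
next
  case (KAct p) then show ?case by (auto simp: rsig_def)
next
  case (KPlus e1 e2)
  have "rsem G (rtau G \<tau>) (rsig G \<sigma>) e1 \<subseteq> rsem H (rtau H \<tau>) (rsig H \<sigma>) e1"
       "rsem G (rtau G \<tau>) (rsig G \<sigma>) e2 \<subseteq> rsem H (rtau H \<tau>) (rsig H \<sigma>) e2"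
    using KPlus.IH KPlus.prems by simp_all
  then show ?case by (simp only: rsem.simps) blast
next
  case (KSeq e1 e2)
  have "rsem G (rtau G \<tau>) (rsig G \<sigma>) e1 \<subseteq> rsem H (rtau H \<tau>) (rsig H \<sigma>) e1"
       "rsem G (rtau G \<tau>) (rsig G \<sigma>) e2 \<subseteq> rsem H (rtau H \<tau>) (rsig H \<sigma>) e2"
    using KSeq.IH KSeq.prems by simp_all
  then show ?case by (simp only: rsem.simps) (rule relcomp_mono)
next
  case (KStar e)
  have "rsem G (rtau G \<tau>) (rsig G \<sigma>) e \<subseteq> rsem H (rtau H \<tau>) (rsig H \<sigma>) e"
    using KStar.IH KStar.prems by simp
  then have "(rsem G (rtau G \<tau>) (rsig G \<sigma>) e)\<^sup>+ \<subseteq> (rsem H (rtau H \<tau>) (rsig H \<sigma>) e)\<^sup>+"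
    by (rule trancl_mono_subset)
  moreover have "Id_on G \<subseteq> Id_on H" using KStar.prems by auto
  ultimately show ?case by (simp only: rsem.simps) blast
qed

lemma witness:
  assumes "interp S \<tau> \<sigma>"
  shows "(x,y) \<in> rsem S \<tau> \<sigma> e \<Longrightarrow> \<exists>F. finite F \<and> F \<subseteq> S \<and> (x,y) \<in> rsem F (rtau F \<tau>) (rsig F \<sigma>) e"
proof (induction e arbitrary: x y)
  case (KTest b)
  have T: "\<forall>t. \<tau> t \<subseteq> S" using assms by (auto simp: interp_def)
  from KTest have xy: "x = y" "x \<in> bsem S \<tau> b" by auto
  then have xS: "x \<in> S" using bsem_sub[OF T] by auto
  have "x \<in> bsem {x} (rtau {x} \<tau>) b" using bsem_res[OF T, of "{x}" b] xy xS by auto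
  then show ?case using xy xS by (intro exI[of _ "{x}"]) auto
next
  case (KAct p)
  then have "x \<in> S" "y \<in> S" using assms by (auto simp: interp_def)
  then show ?case using KAct by (intro exI[of _ "{x,y}"]) (auto simp: rsig_def)
next
  case (KPlus e1 e2) then show ?case by fastforce
next
  case (KSeq e1 e2)
  then obtain z where z: "(x,z) \<in> rsem S \<tau> \<sigma> e1" "(z,y) \<in> rsem S \<tau> \<sigma> e2" by auto
  obtain F1 where F1: "finite F1" "F1 \<subseteq> S" "(x,z) \<in> rsem F1 (rtau F1 \<tau>) (rsig F1 \<sigma>) e1"
    using KSeq.IH(1)[OF z(1)] by blast
  obtain F2 where F2: "finite F2" "F2 \<subseteq> S" "(z,y) \<in> rsem F2 (rtau F2 \<tau>) (rsig F2 \<sigma>) e2"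
    using KSeq.IH(2)[OF z(2)] by blast
  have "(x,z) \<in> rsem (F1 \<union> F2) (rtau (F1 \<union> F2) \<tau>) (rsig (F1 \<union> F2) \<sigma>) e1"
    using rsem_mono[OF assms, of F1 "F1 \<union> F2" e1] F1 F2 by auto
  moreover have "(z,y) \<in> rsem (F1 \<union> F2) (rtau (F1 \<union> F2) \<tau>) (rsig (F1 \<union> F2) \<sigma>) e2"
    using rsem_mono[OF assms, of F2 "F1 \<union> F2" e2] F1 F2 by auto
  ultimately show ?case using F1 F2 by (intro exI[of _ "F1 \<union> F2"]) auto
next
  case (KStar e)
  show ?case
  proof (cases "(x,y) \<in> Id_on S")
    case True then show ?thesis by (intro exI[of _ "{x}"]) auto
  next
    case False
    then have tr: "(x,y) \<in> (rsem S \<tau> \<sigma> e)\<^sup>+" using KStar.prems by auto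
    have "\<exists>F. finite F \<and> F \<subseteq> S \<and> (x,y) \<in> (rsem F (rtau F \<tau>) (rsig F \<sigma>) e)\<^sup>+"
      using tr
    proof (induction rule: trancl_induct)
      case (base y)
      then show ?case using KStar.IH[OF base] by blast
    next
      case (step y z)
      obtain F1 where F1: "finite F1" "F1 \<subseteq> S" "(x,y) \<in> (rsem F1 (rtau F1 \<tau>) (rsig F1 \<sigma>) e)\<^sup>+"
        using step.IH by blast
      obtain F2 where F2: "finite F2" "F2 \<subseteq> S" "(y,z) \<in> rsem F2 (rtau F2 \<tau>) (rsig F2 \<sigma>) e"
        using KStar.IH[OF step.hyps(2)] by blast
      have m1: "rsem F1 (rtau F1 \<tau>) (rsig F1 \<sigma>) e \<subseteq> rsem (F1 \<union> F2) (rtau (F1 \<union> F2) \<tau>) (rsig (F1 \<union> F2) \<sigma>) e"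
        using rsem_mono[OF assms, of F1 "F1 \<union> F2" e] F1 F2 by auto
      have m2: "rsem F2 (rtau F2 \<tau>) (rsig F2 \<sigma>) e \<subseteq> rsem (F1 \<union> F2) (rtau (F1 \<union> F2) \<tau>) (rsig (F1 \<union> F2) \<sigma>) e"
        using rsem_mono[OF assms, of F2 "F1 \<union> F2" e] F1 F2 by auto
      have "(x,y) \<in> (rsem (F1 \<union> F2) (rtau (F1 \<union> F2) \<tau>) (rsig (F1 \<union> F2) \<sigma>) e)\<^sup>+"
        using trancl_mono[OF F1(3) m1] .
      moreover have "(y,z) \<in> rsem (F1 \<union> F2) (rtau (F1 \<union> F2) \<tau>) (rsig (F1 \<union> F2) \<sigma>) e"
        using m2 F2 by auto
      ultimately show ?case using F1 F2 by (intro exI[of _ "F1 \<union> F2"]) auto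
    qed
    then show ?thesis by auto
  qed
qed

definition pb :: "'a set \<Rightarrow> ('a \<Rightarrow> 's) \<Rightarrow> ('s \<times> 's) set \<Rightarrow> ('a \<times> 'a) set" where
  "pb A g R = {(a,b). a \<in> A \<and> b \<in> A \<and> (g a, g b) \<in> R}"

lemma pb_trancl:
  assumes bij: "bij_betw g A F" and R: "R \<subseteq> F \<times> F"
  shows "(pb A g R)\<^sup>+ = pb A g (R\<^sup>+)"
proof
  show "(pb A g R)\<^sup>+ \<subseteq> pb A g (R\<^sup>+)"
  proof
    fix p assume "p \<in> (pb A g R)\<^sup>+"
    then obtain a b where ab: "(a,b) \<in> (pb A g R)\<^sup>+" "p = (a,b)" by (cases p) auto
    from ab(1) have "(a,b) \<in> pb A g (R\<^sup>+)"
    proof (induction rule: trancl_induct)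
      case (base y) then show ?case by (auto simp: pb_def)
    next
      case (step y z) then show ?case by (auto simp: pb_def intro: trancl_into_trancl)
    qed
    then show "p \<in> pb A g (R\<^sup>+)" using ab by simp
  qed
next
  show "pb A g (R\<^sup>+) \<subseteq> (pb A g R)\<^sup>+"
  proof
    fix p assume "p \<in> pb A g (R\<^sup>+)"
    then obtain a b where ab: "a \<in> A" "b \<in> A" "(g a, g b) \<in> R\<^sup>+" "p = (a,b)"
      by (cases p) (auto simp: pb_def)
    have "\<forall>b. b \<in> A \<longrightarrow> v = g b \<longrightarrow> (a,b) \<in> (pb A g R)\<^sup>+" if "(g a, v) \<in> R\<^sup>+" for v
      using that
    proof (induction rule: trancl_induct)
      case (base y)
      then show ?case using ab(1) by (auto simp: pb_def)
    next
      case (step y z)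
      have "y \<in> F" using step.hyps(2) R by auto
      then obtain c where c: "c \<in> A" "y = g c" using bij by (auto simp: bij_betw_def)
      show ?case
      proof (intro allI impI)
        fix b assume "b \<in> A" "z = g b"
        then have "(c,b) \<in> pb A g R" using c step.hyps(2) by (auto simp: pb_def)
        moreover have "(a,c) \<in> (pb A g R)\<^sup>+" using step.IH c by auto
        ultimately show "(a,b) \<in> (pb A g R)\<^sup>+" by (meson trancl_into_trancl)
      qed
    qed
    then show "p \<in> (pb A g R)\<^sup>+" using ab by auto
  qed
qed

lemma bsem_pb:
  assumes "bij_betw g A F"
  shows "bsem A (\<lambda>t. {a\<in>A. g a \<in> \<tau> t}) b = {a\<in>A. g a \<in> bsem F \<tau> b}"
  using assms by (induction b) (auto simp: bij_betw_def)

lemma rsem_pb: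
  assumes bij: "bij_betw g A F" and I: "interp F \<tau> \<sigma>"
  shows "rsem A (\<lambda>t. {a\<in>A. g a \<in> \<tau> t}) (\<lambda>p. pb A g (\<sigma> p)) e = pb A g (rsem F \<tau> \<sigma> e)"
proof (induction e)
  case (KTest b)
  show ?case using bsem_pb[OF bij, of \<tau> b] bij by (auto simp: pb_def bij_betw_def inj_on_def)
next
  case (KAct p) then show ?case by simp
next
  case (KPlus e1 e2) then show ?case by (auto simp: pb_def)
next
  case (KSeq e1 e2)
  have s1: "rsem F \<tau> \<sigma> e1 \<subseteq> F \<times> F" using rsem_sub[OF I] .
  show ?case
  proof
    show "rsem A (\<lambda>t. {a \<in> A. g a \<in> \<tau> t}) (\<lambda>p. pb A g (\<sigma> p)) (KSeq e1 e2) \<subseteq> pb A g (rsem F \<tau> \<sigma> (KSeq e1 e2))"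
      using KSeq by (auto simp: pb_def)
  next
    show "pb A g (rsem F \<tau> \<sigma> (KSeq e1 e2)) \<subseteq> rsem A (\<lambda>t. {a \<in> A. g a \<in> \<tau> t}) (\<lambda>p. pb A g (\<sigma> p)) (KSeq e1 e2)"
    proof
      fix p assume "p \<in> pb A g (rsem F \<tau> \<sigma> (KSeq e1 e2))"
      then obtain a b z where ab: "a \<in> A" "b \<in> A" "(g a, z) \<in> rsem F \<tau> \<sigma> e1" "(z, g b) \<in> rsem F \<tau> \<sigma> e2" "p = (a,b)"
        by (cases p) (auto simp: pb_def)
      have "z \<in> F" using ab(3) s1 by auto
      then obtain c where c: "c \<in> A" "z = g c" using bij by (auto simp: bij_betw_def)
      have "(a,c) \<in> pb A g (rsem F \<tau> \<sigma> e1)" "(c,b) \<in> pb A g (rsem F \<tau> \<sigma> e2)"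
        using ab c by (auto simp: pb_def)
      then show "p \<in> rsem A (\<lambda>t. {a \<in> A. g a \<in> \<tau> t}) (\<lambda>p. pb A g (\<sigma> p)) (KSeq e1 e2)"
        using KSeq ab by auto
    qed
  qed
next
  case (KStar e)
  have s: "rsem F \<tau> \<sigma> e \<subseteq> F \<times> F" using rsem_sub[OF I] .
  have t: "(pb A g (rsem F \<tau> \<sigma> e))\<^sup>+ = pb A g ((rsem F \<tau> \<sigma> e)\<^sup>+)"
    using pb_trancl[OF bij s] .
  have i: "Id_on A = pb A g (Id_on F)"
    using bij by (auto simp: pb_def bij_betw_def inj_on_def Id_on_def)
  have "pb A g (Id_on F \<union> (rsem F \<tau> \<sigma> e)\<^sup>+) = pb A g (Id_on F) \<union> pb A g ((rsem F \<tau> \<sigma> e)\<^sup>+)"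
    by (auto simp: pb_def)
  then show ?case using KStar t i by simp
qed

theorem proposition4p5:
  fixes e :: "('p::finite, 't::finite) kat"
  assumes "\<not> deterministic_in TYPE('s) e"
  shows "\<exists>(S::nat set) \<tau> \<sigma>. finite S \<and> interp S \<tau> \<sigma> \<and> (\<forall>p. partial_fun_graph (\<sigma> p))
           \<and> \<not> partial_fun_graph (rsem S \<tau> \<sigma> e)"
proof -
  obtain S :: "'s set" and \<tau> \<sigma> where I: "interp S \<tau> \<sigma>" and P: "\<forall>p. partial_fun_graph (\<sigma> p)"
    and N: "\<not> partial_fun_graph (rsem S \<tau> \<sigma> e)"
    using assms unfolding deterministic_in_def by blast
  then obtain x y z where xyz: "(x,y) \<in> rsem S \<tau> \<sigma> e" "(x,z) \<in> rsem S \<tau> \<sigma> e" "y \<noteq> z"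
    unfolding partial_fun_graph_def by blast
  obtain F1 where F1: "finite F1" "F1 \<subseteq> S" "(x,y) \<in> rsem F1 (rtau F1 \<tau>) (rsig F1 \<sigma>) e"
    using witness[OF I xyz(1)] by blast
  obtain F2 where F2: "finite F2" "F2 \<subseteq> S" "(x,z) \<in> rsem F2 (rtau F2 \<tau>) (rsig F2 \<sigma>) e"
    using witness[OF I xyz(2)] by blast
  define F where "F = F1 \<union> F2"
  define \<tau>' where "\<tau>' = rtau F \<tau>"
  define \<sigma>' where "\<sigma>' = rsig F \<sigma>"
  have fF: "finite F" using F1 F2 F_def by auto
  have R1: "(x,y) \<in> rsem F \<tau>' \<sigma>' e"
    using rsem_mono[OF I, of F1 F e] F1 F2 unfolding F_def \<tau>'_def \<sigma>'_def by auto
  have R2: "(x,z) \<in> rsem F \<tau>' \<sigma>' e"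
    using rsem_mono[OF I, of F2 F e] F1 F2 unfolding F_def \<tau>'_def \<sigma>'_def by auto
  have I': "interp F \<tau>' \<sigma>'" unfolding interp_def \<tau>'_def \<sigma>'_def rtau_def rsig_def by auto
  obtain g where bij: "bij_betw g {0..<card F} F" using ex_bij_betw_nat_finite[OF fF] by blast
  define A where "A = {0..<card F}"
  have bij': "bij_betw g A F" using bij A_def by simp
  define \<tau>'' where "\<tau>'' = (\<lambda>t. {a\<in>A. g a \<in> \<tau>' t})"
  define \<sigma>'' where "\<sigma>'' = (\<lambda>p. pb A g (\<sigma>' p))"
  have E: "rsem A \<tau>'' \<sigma>'' e = pb A g (rsem F \<tau>' \<sigma>' e)"
    unfolding \<tau>''_def \<sigma>''_def using rsem_pb[OF bij' I'] .
  have sub: "rsem F \<tau>' \<sigma>' e \<subseteq> F \<times> F" using rsem_sub[OF I'] .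
  have "x \<in> F" "y \<in> F" "z \<in> F" using R1 R2 sub by auto
  then obtain a b c where abc: "a \<in> A" "b \<in> A" "c \<in> A" "x = g a" "y = g b" "z = g c"
    using bij' by (auto simp: bij_betw_def)
  have "(a,b) \<in> rsem A \<tau>'' \<sigma>'' e" "(a,c) \<in> rsem A \<tau>'' \<sigma>'' e"
    using E R1 R2 abc by (auto simp: pb_def)
  moreover have "b \<noteq> c" using abc xyz(3) by auto
  ultimately have N'': "\<not> partial_fun_graph (rsem A \<tau>'' \<sigma>'' e)"
    unfolding partial_fun_graph_def by blast
  have I'': "interp A \<tau>'' \<sigma>''" unfolding interp_def \<tau>''_def \<sigma>''_def pb_def by auto
  have P'': "\<forall>p. partial_fun_graph (\<sigma>'' p)"
  proof
    fix p
    show "partial_fun_graph (\<sigma>'' p)"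
      unfolding partial_fun_graph_def
    proof (intro allI impI)
      fix u v w assume uv: "(u,v) \<in> \<sigma>'' p" and uw: "(u,w) \<in> \<sigma>'' p"
      then have "(g u, g v) \<in> \<sigma> p" "(g u, g w) \<in> \<sigma> p" "v \<in> A" "w \<in> A"
        unfolding \<sigma>''_def \<sigma>'_def pb_def rsig_def by auto
      then have "g v = g w" using P unfolding partial_fun_graph_def by blast
      then show "v = w" using bij' \<open>v \<in> A\<close> \<open>w \<in> A\<close> by (auto simp: bij_betw_def inj_on_def)
    qed
  qed
  have "finite A" unfolding A_def by simp
  then show ?thesis using I'' P'' N'' by blast
qed

end
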